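(* For $\alpha\in[1/2,1)$ consider the singular initial value problem $$h'(\theta)=-\frac{1}{\sin\theta}\big(\alpha h(\theta)^2-\cos\theta\,h(\theta)+1-\alpha\big),\quad 0<\theta\le\frac{\pi}{2},\qquad h(0)=1,\qquad(\ast)$$ where a (classical) solution is a function $h\in C[0,\pi/2]\cap C^1(0,\pi/2]$ satisfying the equation on $(0,\pi/2]$ and $h(0)=1$. (i) If $\alpha\in(1/2,1)$, then $(\ast)$ has a unique solution $h(\alpha,\cdot)$; moreover, if $1/2<\alpha_1<\alpha_2<1$ then $h(\alpha_1,\theta)<h(\alpha_2,\theta)$ for all $\theta\in(0,\pi/2]$. (ii) If $\alpha=1/2$, then $(\ast)$ has infinitely many (a continuum of) positive solutions. (iii) Let $\alpha\in(1/2,1)$ and let $\overline h\in C[0,\pi/2]\cap C^1(0,\pi/2]$ satisfy $\overline h'(\theta)\ge-\frac{1}{\sin\theta}\big(\alpha\overline h(\theta)^2-\cos\theta\,\overline h(\theta)+1-\alpha\big)$ for $0<\theta\le\pi/2$ and $\overline h(0)\ge1$. Then $h(\alpha,\theta)\le\overline h(\theta)$ for all $0\le\theta\le\pi/2$. *)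

theory Defs
  imports "HOL-Analysis.Analysis"
begin

definition rhs :: "real \<Rightarrow> real \<Rightarrow> real \<Rightarrow> real" where
  "rhs \<alpha> \<theta> y = - (1 / sin \<theta>) * (\<alpha> * y\<^sup>2 - cos \<theta> * y + 1 - \<alpha>)"

definition C0C1_with_deriv :: "(real \<Rightarrow> real) \<Rightarrow> (real \<Rightarrow> real) \<Rightarrow> bool" where
  "C0C1_with_deriv h h' \<longleftrightarrow>
     continuous_on {0..pi/2} h \<and>
     (\<forall>\<theta>\<in>{0<..pi/2}. (h has_real_derivative h' \<theta>) (at \<theta> within {0<..pi/2})) \<and>
     continuous_on {0<..pi/2} h'"

definition is_solution :: "real \<Rightarrow> (real \<Rightarrow> real) \<Rightarrow> bool" where
  "is_solution \<alpha> h \<longleftrightarrow>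
     (\<exists>h'. C0C1_with_deriv h h' \<and> (\<forall>\<theta>\<in>{0<..pi/2}. h' \<theta> = rhs \<alpha> \<theta> (h \<theta>))) \<and> h 0 = 1"

definition is_supersolution :: "real \<Rightarrow> (real \<Rightarrow> real) \<Rightarrow> bool" where
  "is_supersolution \<alpha> h \<longleftrightarrow>
     (\<exists>h'. C0C1_with_deriv h h' \<and> (\<forall>\<theta>\<in>{0<..pi/2}. h' \<theta> \<ge> rhs \<alpha> \<theta> (h \<theta>))) \<and> h 0 \<ge> 1"

end

theory Submission
  imports Defs
begin


primrec cf :: "real \<Rightarrow> nat \<Rightarrow> real" where
  "cf a 0 = 1"
| "cf a (Suc k) = cf a k * (a + real k)^2 / ((real k + 1) * (real k + a + 1/2))"

lemma cf_pos: "0 < a \<Longrightarrow> 0 < cf a k"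
  by (induction k) auto

lemma cf_le1:
  assumes "1/2 \<le> a" "a < 1" shows "cf a k \<le> 1"
proof (induction k)
  case 0 then show ?case by simp
next
  case (Suc k)
  have a0: "0 < a" using assms by simp
  have r: "(a + real k)^2 \<le> (real k + 1) * (real k + a + 1/2)"
  proof -
    have "(a + real k)^2 - (real k + 1) * (real k + a + 1/2) = a^2 + real k * (a - 3/2) - a - 1/2"
      by (simp add: power2_eq_square algebra_simps)
    also have "\<dots> \<le> 0"
    proof -
      have "real k * (a - 3/2) \<le> 0" using assms by (simp add: mult_nonneg_nonpos)
      moreover have "a^2 - a - 1/2 \<le> 0"
      proof -
        have "a * a \<le> a * 1" using assms by (intro mult_left_mono) auto
        thus ?thesis by (simp add: power2_eq_square)
      qed
      ultimately show ?thesis by simp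
    qed
    finally show ?thesis by simp
  qed
  have p: "0 < (real k + 1) * (real k + a + 1/2)" using a0 by simp
  have "cf a (Suc k) = cf a k * ((a + real k)^2 / ((real k + 1) * (real k + a + 1/2)))" by simp
  also have "\<dots> \<le> 1 * 1"
    using Suc cf_pos[OF a0, of k] r p
    by (intro mult_mono) (auto simp: divide_le_eq_1)
  finally show ?case by simp
qed

lemma cf_step: assumes "0 < a" shows "(real k + 1) * (real k + a + 1/2) * cf a (Suc k) = (a + real k)^2 * cf a k"
proof -
  have "(real k + 1) * (real k + a + 1/2) \<noteq> 0" using assms by (simp add: add_pos_pos)
  thus ?thesis by simp
qed

lemma cf_abs: "1/2 \<le> a \<Longrightarrow> a < 1 \<Longrightarrow> \<bar>cf a k\<bar> \<le> 1"
  using cf_le1[of a k] cf_pos[of a k] by simp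

declare cf.simps(2)[simp del]

definition FF :: "real \<Rightarrow> real fps" where "FF a = Abs_fps (cf a)"
definition GG :: "real \<Rightarrow> real fps" where "GG a = Abs_fps (\<lambda>n. cf a (Suc n))"

lemma conv_radius_bounded:
  fixes c :: "nat \<Rightarrow> real"
  assumes "\<And>n. \<bar>c n\<bar> \<le> 1" shows "conv_radius c \<ge> 1"
proof (rule conv_radius_geI_ex')
  fix r :: real assume r: "0 < r" "ereal r < 1"
  hence r1: "r < 1" by simp
  show "summable (\<lambda>n. c n * of_real r ^ n)"
  proof (rule summable_comparison_test[of _ "\<lambda>n. r ^ n"])
    show "\<exists>N. \<forall>n\<ge>N. norm (c n * of_real r ^ n) \<le> r ^ n"
      using assms r by (auto simp: abs_mult intro!: mult_left_le_one_le)
    show "summable (\<lambda>n. r ^ n)" using r r1 by (simp add: summable_geometric)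
  qed
qed

lemma FF_radius: "1/2 \<le> a \<Longrightarrow> a < 1 \<Longrightarrow> fps_conv_radius (FF a) \<ge> 1"
  unfolding fps_conv_radius_def FF_def
  by (rule conv_radius_bounded) (simp add: cf_abs)

lemma GG_radius: "1/2 \<le> a \<Longrightarrow> a < 1 \<Longrightarrow> fps_conv_radius (GG a) \<ge> 1"
  unfolding fps_conv_radius_def GG_def
  unfolding fps_nth_Abs_fps by (rule conv_radius_bounded, rule cf_abs) auto


lemma R1_add: "1 \<le> fps_conv_radius f \<Longrightarrow> 1 \<le> fps_conv_radius g \<Longrightarrow> 1 \<le> fps_conv_radius (f + g)"
  using fps_conv_radius_add[of f g] by (meson min.boundedI order.trans)
lemma R1_diff: "1 \<le> fps_conv_radius f \<Longrightarrow> 1 \<le> fps_conv_radius g \<Longrightarrow> 1 \<le> fps_conv_radius (f - g)"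
  using fps_conv_radius_diff[of f g] by (meson min.boundedI order.trans)
lemma R1_mult: "1 \<le> fps_conv_radius f \<Longrightarrow> 1 \<le> fps_conv_radius g \<Longrightarrow> 1 \<le> fps_conv_radius (f * (g::real fps))"
  using fps_conv_radius_mult[of f g] by (meson min.boundedI order.trans)
lemma R1_X: "1 \<le> fps_conv_radius (fps_X :: real fps)" by simp
lemma R1_const: "1 \<le> fps_conv_radius (fps_const (c::real))" by simp
lemma R1_one: "1 \<le> fps_conv_radius (1 :: real fps)" by simp
lemma R1_deriv: "1 \<le> fps_conv_radius f \<Longrightarrow> 1 \<le> fps_conv_radius (fps_deriv (f :: real fps))"
  using fps_conv_radius_deriv[of f] by (simp add: order_trans)
lemma R1_lt: "1 \<le> fps_conv_radius f \<Longrightarrow> \<bar>z\<bar> < 1 \<Longrightarrow> norm (z::real) < fps_conv_radius f"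
  by (metis ereal_less(3) less_le_trans real_norm_def)

lemmas R1_intros = R1_add R1_diff R1_mult R1_X R1_const R1_one R1_deriv

lemma ev_add: "1 \<le> fps_conv_radius f \<Longrightarrow> 1 \<le> fps_conv_radius g \<Longrightarrow> \<bar>z\<bar> < 1 \<Longrightarrow>
   eval_fps (f + g) z = eval_fps f z + eval_fps g (z::real)"
  by (intro eval_fps_add R1_lt)
lemma ev_diff: "1 \<le> fps_conv_radius f \<Longrightarrow> 1 \<le> fps_conv_radius g \<Longrightarrow> \<bar>z\<bar> < 1 \<Longrightarrow>
   eval_fps (f - g) z = eval_fps f z - eval_fps g (z::real)"
  by (intro eval_fps_diff R1_lt)
lemma ev_mult: "1 \<le> fps_conv_radius f \<Longrightarrow> 1 \<le> fps_conv_radius g \<Longrightarrow> \<bar>z\<bar> < 1 \<Longrightarrow>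
   eval_fps (f * g) z = eval_fps f z * eval_fps g (z::real)"
  by (intro eval_fps_mult R1_lt)

abbreviation DF where "DF a \<equiv> fps_deriv (FF a)"
abbreviation DDF where "DDF a \<equiv> fps_deriv (fps_deriv (FF a))"

lemma nth_XDDF: "fps_nth (fps_X * DDF a) n = real n * (real n + 1) * cf a (Suc n)"
  by (cases n) (simp_all add: FF_def algebra_simps)
lemma nth_XXDDF: "fps_nth (fps_X * (fps_X * DDF a)) n = real n * (real n - 1) * cf a n"
  by (cases n; cases "n - 1") (simp_all add: FF_def algebra_simps)
lemma nth_XDF: "fps_nth (fps_X * DF a) n = real n * cf a n"
  by (cases n) (simp_all add: FF_def algebra_simps)
lemma nth_DF: "fps_nth (DF a) n = (real n + 1) * cf a (Suc n)"
  by (simp add: FF_def algebra_simps)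

lemma nth_FF: "fps_nth (FF a) n = cf a n" by (simp add: FF_def)

lemma FF_ode_fps:
  assumes "0 < a"
  shows "fps_X * DDF a - fps_X * (fps_X * DDF a) + fps_const (a + 1/2) * DF a
          - fps_const (2*a+1) * (fps_X * DF a) - fps_const (a^2) * FF a = 0"
proof (rule fps_ext)
  fix n
  have "real n * (real n + 1) * cf a (Suc n) - real n * (real n - 1) * cf a n
        + (a + 1/2) * ((real n + 1) * cf a (Suc n)) - (2*a+1) * (real n * cf a n) - a^2 * cf a n
        = (real n + 1) * (real n + a + 1/2) * cf a (Suc n) - (a + real n)^2 * cf a n"
    by (simp add: algebra_simps power2_eq_square add_divide_distrib)
  also have "\<dots> = 0" using cf_step[OF assms, of n] by simp
  finally show "fps_nth (fps_X * DDF a - fps_X * (fps_X * DDF a) + fps_const (a + 1/2) * DF a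
          - fps_const (2*a+1) * (fps_X * DF a) - fps_const (a^2) * FF a) n = fps_nth 0 n"
    by (simp only: fps_sub_nth fps_add_nth fps_mult_left_const_nth nth_XDDF nth_XXDDF nth_XDF nth_DF
       fps_zero_nth nth_FF)
qed


lemma R1_FF: "1/2 \<le> a \<Longrightarrow> a < 1 \<Longrightarrow> 1 \<le> fps_conv_radius (FF a)" using FF_radius by simp
lemma R1_GG: "1/2 \<le> a \<Longrightarrow> a < 1 \<Longrightarrow> 1 \<le> fps_conv_radius (GG a)" using GG_radius by simp

definition Fv :: "real \<Rightarrow> real \<Rightarrow> real" where "Fv a z = eval_fps (FF a) z"
definition F1v :: "real \<Rightarrow> real \<Rightarrow> real" where "F1v a z = eval_fps (DF a) z"
definition F2v :: "real \<Rightarrow> real \<Rightarrow> real" where "F2v a z = eval_fps (DDF a) z"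
definition Gv :: "real \<Rightarrow> real \<Rightarrow> real" where "Gv a z = eval_fps (GG a) z"

lemma ode_eval:
  assumes "1/2 \<le> a" "a < 1" "\<bar>z\<bar> < 1"
  shows "z * (1 - z) * F2v a z + (a + 1/2) * (1 - 2*z) * F1v a z - a^2 * Fv a z = 0"
proof -
  have a0: "0 < a" using assms by simp
  have R: "1 \<le> fps_conv_radius (FF a)" using R1_FF assms by simp
  have "eval_fps (fps_X * DDF a - fps_X * (fps_X * DDF a) + fps_const (a + 1/2) * DF a
          - fps_const (2*a+1) * (fps_X * DF a) - fps_const (a^2) * FF a) z = 0"
    using FF_ode_fps[OF a0] by simp
  hence "z * F2v a z - z * (z * F2v a z) + (a + 1/2) * F1v a z - (2*a+1) * (z * F1v a z) - a^2 * Fv a z = 0"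
    using R assms(3) unfolding Fv_def F1v_def F2v_def
    by (simp add: ev_add ev_diff ev_mult R1_add R1_diff R1_mult R1_deriv)
  thus ?thesis by (simp add: algebra_simps)
qed

lemma Fv_deriv: "1/2 \<le> a \<Longrightarrow> a < 1 \<Longrightarrow> \<bar>z\<bar> < 1 \<Longrightarrow> (Fv a has_real_derivative F1v a z) (at z within A)"
  unfolding Fv_def F1v_def by (intro has_field_derivative_eval_fps R1_lt R1_FF) auto
lemma F1v_deriv: "1/2 \<le> a \<Longrightarrow> a < 1 \<Longrightarrow> \<bar>z\<bar> < 1 \<Longrightarrow> (F1v a has_real_derivative F2v a z) (at z within A)"
  unfolding F1v_def F2v_def by (intro has_field_derivative_eval_fps R1_lt R1_deriv R1_FF) auto
lemma Gv_cont: "1/2 \<le> a \<Longrightarrow> a < 1 \<Longrightarrow> \<bar>z\<bar> < 1 \<Longrightarrow> isCont (Gv a) z"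
  unfolding Gv_def by (intro continuous_eval_fps R1_lt R1_GG) auto

lemma eval_ge_head:
  fixes G :: "real fps"
  assumes "1 \<le> fps_conv_radius G" "0 \<le> z" "z < 1" "\<And>n. 0 \<le> fps_nth G n"
  shows "fps_nth G 0 \<le> eval_fps G z"
proof -
  have s: "summable (\<lambda>n. fps_nth G n * z ^ n)" using assms by (intro summable_fps R1_lt) auto
  have "sum (\<lambda>n. fps_nth G n * z ^ n) {..<1} \<le> (\<Sum>n. fps_nth G n * z ^ n)"
    by (rule sum_le_suminf[OF s]) (use assms in auto)
  thus ?thesis by (simp add: eval_fps_def)
qed

lemma Fv_ge1: "1/2 \<le> a \<Longrightarrow> a < 1 \<Longrightarrow> 0 \<le> z \<Longrightarrow> z < 1 \<Longrightarrow> 1 \<le> Fv a z"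
  using eval_ge_head[of "FF a" z] R1_FF[of a] cf_pos[of a] unfolding Fv_def
  by (simp add: nth_FF less_imp_le)

lemma F1v_ge: assumes "1/2 \<le> a" "a < 1" "0 \<le> z" "z < 1" shows "cf a 1 \<le> F1v a z"
proof -
  have "fps_nth (DF a) 0 \<le> eval_fps (DF a) z"
    by (rule eval_ge_head[OF R1_deriv[OF R1_FF[OF assms(1,2)]] assms(3,4)])
       (simp only: nth_DF, use cf_pos[of a] assms in \<open>auto intro!: mult_nonneg_nonneg less_imp_le\<close>)
  thus ?thesis by (simp add: F1v_def nth_DF nth_FF)
qed

lemma Gv_ge0: assumes "1/2 \<le> a" "a < 1" "0 \<le> z" "z < 1" shows "0 \<le> Gv a z"
proof -
  have "fps_nth (GG a) 0 \<le> eval_fps (GG a) z"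
    by (rule eval_ge_head[OF R1_GG[OF assms(1,2)] assms(3,4)])
       (use cf_pos[of a] assms in \<open>auto simp: GG_def intro!: less_imp_le\<close>)
  moreover have "0 < fps_nth (GG a) 0" using cf_pos[of a] assms by (simp add: GG_def)
  ultimately show ?thesis by (simp add: Gv_def)
qed

lemma Fv_G: assumes "1/2 \<le> a" "a < 1" "\<bar>z\<bar> < 1" shows "Fv a z = 1 + z * Gv a z"
proof -
  have "FF a = 1 + fps_X * GG a"
    by (rule fps_ext) (auto simp: FF_def GG_def nth_FF intro: cf.simps(1) split: nat.split)
  hence "Fv a z = eval_fps (1 + fps_X * GG a) z" by (simp add: Fv_def)
  also have "\<dots> = 1 + z * Gv a z" using assms R1_GG[OF assms(1,2)]
    by (simp add: ev_add ev_mult R1_mult Gv_def)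
  finally show ?thesis .
qed

lemma key_ineq: assumes "1/2 \<le> a" "a < 1" "0 \<le> z" "z < 1"
  shows "(1 - z) * F1v a z < a * Fv a z"
proof -
  have a0: "0 < a" using assms by simp
  define Q where "Q = fps_const a * FF a - (DF a - fps_X * DF a)"
  have nQ: "fps_nth Q n = (real n + a) * cf a n - (real n + 1) * cf a (Suc n)" for n
    by (simp only: Q_def fps_sub_nth fps_mult_left_const_nth nth_XDF nth_DF nth_FF) (simp add: algebra_simps)
  have pQ: "0 < fps_nth Q n" for n
  proof -
    have d: "0 < real n + a + 1/2" using a0 by simp
    have "(real n + 1) * cf a (Suc n) = (a + real n)^2 * cf a n / (real n + a + 1/2)"
      using cf_step[OF a0, of n] d by (simp add: field_simps)
    also have "\<dots> < (real n + a) * cf a n"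
    proof -
      have p: "0 < (real n + a) * cf a n" using cf_pos[OF a0, of n] a0 by simp
      have "(a + real n)^2 * cf a n = ((real n + a) * cf a n) * (real n + a)"
        by (simp add: power2_eq_square algebra_simps)
      also have "\<dots> < ((real n + a) * cf a n) * (real n + a + 1/2)"
        using p by (intro mult_strict_left_mono) auto
      finally show ?thesis using d by (simp add: divide_less_eq)
    qed
    finally show ?thesis using nQ by simp
  qed
  have RQ: "1 \<le> fps_conv_radius Q" unfolding Q_def
    using R1_FF[OF assms(1,2)] by (simp add: R1_diff R1_mult R1_deriv)
  have "0 < fps_nth Q 0" by (rule pQ)
  also have "\<dots> \<le> eval_fps Q z" using eval_ge_head[OF RQ assms(3,4)] pQ less_imp_le by blast
  also have "eval_fps Q z = a * Fv a z - (F1v a z - z * F1v a z)"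
    unfolding Q_def Fv_def F1v_def using R1_FF[OF assms(1,2)] assms(3,4)
    by (simp add: ev_diff ev_mult R1_diff R1_mult R1_deriv)
  finally show ?thesis by (simp add: algebra_simps)
qed

lemma Fv_le2: assumes "1/2 \<le> a" "a < 1" "0 \<le> z" "z \<le> 1/2" shows "Fv a z \<le> 2"
proof -
  have "norm z < fps_conv_radius (FF a)" using assms by (intro R1_lt R1_FF) auto
  hence s: "summable (\<lambda>n. cf a n * z ^ n)"
    using summable_fps[of z "FF a"] by (simp add: nth_FF)
  have g: "summable (\<lambda>n. (1/2::real) ^ n)" by (simp add: summable_geometric)
  have "(\<Sum>n. cf a n * z ^ n) \<le> (\<Sum>n. (1/2::real) ^ n)"
  proof (rule suminf_le[OF _ s g])
    fix n
    have "z ^ n \<le> (1/2) ^ n" using assms by (intro power_mono) auto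
    thus "cf a n * z ^ n \<le> (1/2) ^ n"
      using cf_le1[OF assms(1,2), of n] cf_pos[of a n] assms
      by (intro mult_left_le_one_le[THEN order_trans]) (auto intro: less_imp_le)
  qed
  also have "\<dots> = 2" using suminf_geometric[of "1/2::real"] by simp
  finally show ?thesis by (simp add: Fv_def eval_fps_def nth_FF)
qed



definition Hv :: "real \<Rightarrow> real \<Rightarrow> real" where
  "Hv a z = 1 - 2*z + 2*z*(1-z) * F1v a z / (a * Fv a z)"

definition HD :: "real \<Rightarrow> real \<Rightarrow> real" where
  "HD a z = -2 + (2/a) * ((1-2*z) * F1v a z / Fv a z + z*(1-z)*F2v a z / Fv a z
                          - z*(1-z) * (F1v a z)^2 / (Fv a z)^2)"

lemma H_deriv:
  assumes "1/2 \<le> a" "a < 1" "0 \<le> z" "z < 1"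
  shows "(Hv a has_real_derivative HD a z) (at z within A)"
proof -
  have F: "Fv a z \<noteq> 0" using Fv_ge1[OF assms] by simp
  have a0: "a \<noteq> 0" using assms by simp
  have az: "\<bar>z\<bar> < 1" using assms by simp
  show ?thesis
    unfolding Hv_def[abs_def]
    apply (rule DERIV_cong)
    apply (rule derivative_eq_intros Fv_deriv[OF assms(1,2) az] F1v_deriv[OF assms(1,2) az] refl)+
    using F a0 apply simp
    apply (rule refl)+
    using F a0 apply (simp add: HD_def field_simps power2_eq_square)
    done
qed

lemma H_ric:
  assumes "1/2 \<le> a" "a < 1" "0 \<le> z" "z < 1"
  shows "2*z*(1-z) * HD a z = -(a * (Hv a z)^2 - (1-2*z) * Hv a z + 1 - a)"
proof -
  have F: "Fv a z \<noteq> 0" using Fv_ge1[OF assms] by simp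
  have a0: "a \<noteq> 0" using assms by simp
  have e: "z*(1-z)*F2v a z = a^2 * Fv a z - (a + 1/2) * (1 - 2*z) * F1v a z"
    using ode_eval[OF assms(1,2), of z] assms by (simp add: algebra_simps)
  have "HD a z = -2 + (2/a) * ((1-2*z) * F1v a z / Fv a z + (z*(1-z)*F2v a z) / Fv a z
                          - z*(1-z) * (F1v a z)^2 / (Fv a z)^2)"
    by (simp add: HD_def)
  also have "\<dots> = -2 + (2/a) * ((1-2*z) * F1v a z / Fv a z + (a^2 * Fv a z - (a + 1/2) * (1 - 2*z) * F1v a z) / Fv a z
                          - z*(1-z) * (F1v a z)^2 / (Fv a z)^2)"
    by (simp only: e)
  finally have hd: "HD a z = \<dots>" .
  show ?thesis unfolding hd Hv_def using F a0
    by (simp add: field_simps power2_eq_square)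
qed

lemma H_lt1: assumes "1/2 \<le> a" "a < 1" "0 < z" "z < 1" shows "Hv a z < 1"
proof -
  have F: "0 < Fv a z" using Fv_ge1[of a z] assms by simp
  have "(1 - z) * F1v a z < a * Fv a z" using key_ineq[of a z] assms by simp
  hence "2*z*(1-z) * F1v a z < 2 * z * (a * Fv a z)" using assms by simp
  hence "2*z*(1-z) * F1v a z / (a * Fv a z) < 2 * z" using F assms by (simp add: divide_less_eq)
  thus ?thesis by (simp add: Hv_def)
qed

lemma H_ge: assumes "1/2 \<le> a" "a < 1" "0 \<le> z" "z \<le> 1/2" shows "1 - 2*z \<le> Hv a z"
proof -
  have F: "0 < Fv a z" using Fv_ge1[of a z] assms by simp
  have "0 \<le> F1v a z" using F1v_ge[of a z] cf_pos[of a 1] assms by simp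
  hence "0 \<le> 2*z*(1-z) * F1v a z / (a * Fv a z)" using F assms by simp
  thus ?thesis by (simp add: Hv_def)
qed

lemma H0: "Hv a 0 = 1" by (simp add: Hv_def)



lemma within_to_at:
  assumes "(f has_real_derivative D) (at t within {0<..pi/2})" "0 < t" "t < pi/2"
  shows "(f has_real_derivative D) (at t)"
proof -
  have "(f has_real_derivative D) (at t within {0<..<pi/2})"
    using assms(1) by (rule DERIV_subset) (auto simp: subset_iff)
  moreover have "at t within {0<..<pi/2} = at t"
    by (rule at_within_open) (use assms(2,3) in auto)
  ultimately show ?thesis by simp
qed

lemma mvt_nonpos:
  fixes f :: "real \<Rightarrow> real"
  assumes "a < b" "continuous_on {a..b} f" "\<And>t. a < t \<Longrightarrow> t < b \<Longrightarrow> (f has_real_derivative f' t) (at t)"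
    "\<And>t. a < t \<Longrightarrow> t < b \<Longrightarrow> f' t \<le> 0"
  shows "f b \<le> f a"
proof -
  have "f differentiable (at x)" if "a < x" "x < b" for x
    unfolding real_differentiable_def by (rule exI) (rule assms(3)[OF that])
  hence ex: "\<exists>l z. a < z \<and> z < b \<and> DERIV f z :> l \<and> f b - f a = (b - a) * l"
    by (intro MVT[OF assms(1,2)])
  then obtain l z where z: "a < z" "z < b" "DERIV f z :> l" "f b - f a = (b - a) * l"
    by (elim exE conjE)
  have "l = f' z" using DERIV_unique[OF z(3) assms(3)[OF z(1,2)]] .
  hence "l \<le> 0" using assms(4) z by simp
  hence "(b - a) * l \<le> 0" using assms(1) by (intro mult_nonneg_nonpos) auto
  thus ?thesis using z(4) by simp
qed

lemma rhs_diff: "sin t \<noteq> 0 \<Longrightarrow> rhs a t x - rhs a t y = - ((a*(x+y) - cos t) / sin t) * (x - y)"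
  by (simp add: rhs_def field_simps power2_eq_square)

lemma compare:
  assumes a: "1/2 < a"
  and u: "C0C1_with_deriv u u'" "\<forall>t\<in>{0<..pi/2}. u' t \<le> rhs a t (u t)" "u 0 \<le> 1"
  and v: "C0C1_with_deriv v v'" "\<forall>t\<in>{0<..pi/2}. v' t \<ge> rhs a t (v t)" "1 \<le> v 0"
  shows "\<forall>t\<in>{0..pi/2}. u t \<le> v t"
proof (rule ccontr)
  assume "\<not> ?thesis"
  then obtain t1 where t1: "t1 \<in> {0..pi/2}" "u t1 > v t1" by force
  define d where "d t = u t - v t" for t
  have cu: "continuous_on {0..pi/2} u" and du: "\<forall>t\<in>{0<..pi/2}. (u has_real_derivative u' t) (at t within {0<..pi/2})"
    using u(1) unfolding C0C1_with_deriv_def by auto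
  have cv: "continuous_on {0..pi/2} v" and dv: "\<forall>t\<in>{0<..pi/2}. (v has_real_derivative v' t) (at t within {0<..pi/2})"
    using v(1) unfolding C0C1_with_deriv_def by auto
  have cd: "continuous_on {0..pi/2} d" unfolding d_def[abs_def] by (intro continuous_intros cu cv)
  have dd: "(d has_real_derivative (u' t - v' t)) (at t)" if "0 < t" "t < pi/2" for t
    unfolding d_def[abs_def] using du dv that by (intro derivative_intros within_to_at) auto
  have sinpos: "0 < sin t" if "0 < t" "t \<le> pi/2" for t
    using that using pi_gt_zero by (intro sin_gt_zero) auto
  have dle: "u' t - v' t \<le> - ((a*(u t+v t) - cos t) / sin t) * d t" if "0 < t" "t \<le> pi/2" for t
  proof -
    have "u' t - v' t \<le> rhs a t (u t) - rhs a t (v t)" using u(2) v(2) that by force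
    also have "\<dots> = - ((a*(u t+v t) - cos t) / sin t) * d t"
      using rhs_diff sinpos[OF that] d_def by simp
    finally show ?thesis .
  qed
  have d0: "d 0 \<le> 0" using u(3) v(3) d_def by simp
  have t1pos: "0 < t1" using t1 d0 d_def by (cases "t1 = 0") auto
  define S where "S = {t\<in>{0..t1}. d t \<le> 0}"
  have S_closed: "closed S"
  proof -
    have "continuous_on {0..t1} d" by (rule continuous_on_subset[OF cd]) (use t1 in auto)
    hence "closed ({0..t1} \<inter> d -` {..0})" by (rule continuous_closed_preimage) auto
    moreover have "{0..t1} \<inter> d -` {..0} = S" by (auto simp: S_def)
    ultimately show ?thesis by simp
  qed
  have S_ne: "0 \<in> S" using d0 t1pos S_def by auto
  have S_bdd: "bdd_above S" unfolding S_def by (rule bdd_aboveI[of _ t1]) auto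
  define t0 where "t0 = Sup S"
  have t0S: "t0 \<in> S" unfolding t0_def using S_closed S_ne S_bdd by (intro closed_contains_Sup) auto
  have t0ge: "\<forall>s\<in>S. s \<le> t0" unfolding t0_def using S_bdd by (auto intro: cSup_upper)
  have t0lt: "t0 < t1" using t0S t1 d_def S_def by (cases "t0 = t1") auto
  have t0nn: "0 \<le> t0" using t0S S_def by auto
  have dpos: "0 < d t" if "t0 < t" "t \<le> t1" for t
  proof (rule ccontr)
    assume "\<not> 0 < d t"
    hence "t \<in> S" using that t0nn S_def by auto
    thus False using t0ge that by force
  qed
  have dt0: "d t0 = 0"
  proof (rule ccontr)
    assume ne: "d t0 \<noteq> 0"
    hence neg: "d t0 < 0" using t0S S_def by auto
    have "continuous (at t0 within {0..pi/2}) d"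
      using cd t0nn t0lt t1 by (intro continuous_on_imp_continuous_within[OF cd]) auto
    then obtain e where e: "e > 0" "\<forall>s\<in>{0..pi/2}. dist s t0 < e \<longrightarrow> dist (d s) (d t0) < - d t0"
      using neg unfolding continuous_within_eps_delta by (metis neg_0_less_iff_less)
    define s where "s = min t1 (t0 + e/2)"
    have s: "t0 < s" "s \<le> t1" "dist s t0 < e" using e t0lt by (auto simp: s_def dist_real_def)
    have "s \<in> {0..pi/2}" using s t0nn t1 by auto
    hence "dist (d s) (d t0) < - d t0" using e s by auto
    hence "d s < 0" by (simp add: dist_real_def)
    thus False using dpos s by force
  qed
  show False
  proof (cases "t0 = 0")
    case True
    hence uv1: "u 0 = 1" "v 0 = 1" using dt0 u(3) v(3) d_def by auto
    define g where "g t = a * (u t + v t) - cos t" for t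
    have cg: "continuous_on {0..pi/2} g" unfolding g_def[abs_def] by (intro continuous_intros cu cv)
    have g0: "g 0 > 0" using uv1 a by (simp add: g_def)
    have "continuous (at 0 within {0..pi/2}) g" by (intro continuous_on_imp_continuous_within[OF cg]) auto
    then obtain e where e: "e > 0" "\<forall>s\<in>{0..pi/2}. dist s 0 < e \<longrightarrow> dist (g s) (g 0) < g 0"
      using g0 unfolding continuous_within_eps_delta by metis
    define \<eta> where "\<eta> = min t1 (e/2)"
    have eta: "0 < \<eta>" "\<eta> \<le> t1" "\<eta> < e" using e t1pos by (auto simp: \<eta>_def)
    have gpos: "g s > 0" if "0 \<le> s" "s < e" "s \<le> pi/2" for s
    proof -
      have "dist (g s) (g 0) < g 0" using e that by (auto simp: dist_real_def)
      thus ?thesis by (simp add: dist_real_def)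
    qed
    have "d \<eta> \<le> d 0"
    proof (rule mvt_nonpos[of 0 \<eta> d "\<lambda>t. u' t - v' t"])
      show "0 < \<eta>" by (rule eta)
      show "continuous_on {0..\<eta>} d" by (rule continuous_on_subset[OF cd]) (use eta t1 in auto)
      fix t assume t: "0 < t" "t < \<eta>"
      have tp: "t < pi/2" using t eta t1 by auto
      show "(d has_real_derivative u' t - v' t) (at t)" using dd t tp by auto
      have "0 < g t" using gpos t eta tp by auto
      hence "0 \<le> ((a*(u t+v t) - cos t) / sin t) * d t"
        using sinpos[of t] t tp dpos[of t] True eta by (auto simp: g_def intro!: mult_nonneg_nonneg less_imp_le)
      thus "u' t - v' t \<le> 0" using dle[of t] t tp by auto
    qed
    thus False using dpos[of \<eta>] eta True dt0 by auto
  next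
    case False
    hence t0p: "0 < t0" using t0nn by auto
    define A where "A t = (a*(u t+v t) - cos t) / sin t" for t
    have cA: "continuous_on {t0..t1} A"
    proof -
      have "continuous_on {t0..t1} u" "continuous_on {t0..t1} v"
        using cu cv t0p t1 by (auto elim!: continuous_on_subset)
      moreover have "\<forall>t\<in>{t0..t1}. sin t \<noteq> 0"
      proof
        fix t assume "t \<in> {t0..t1}"
        hence "0 < t" "t \<le> pi/2" using t0p t1 by auto
        thus "sin t \<noteq> 0" using sinpos by force
      qed
      ultimately show ?thesis unfolding A_def[abs_def] by (intro continuous_intros) auto
    qed
    obtain M where M: "\<forall>t\<in>{t0..t1}. norm (A t) \<le> M"
      using compact_imp_bounded[OF compact_continuous_image[OF cA compact_Icc]]
      unfolding bounded_iff by auto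
    define e where "e t = d t * exp (- (M * t))" for t
    have "e t1 \<le> e t0"
    proof (rule mvt_nonpos[of t0 t1 e "\<lambda>t. (u' t - v' t) * exp (- (M * t)) + d t * (exp (- (M * t)) * (- M))"])
      show "t0 < t1" by (rule t0lt)
      show "continuous_on {t0..t1} e" unfolding e_def[abs_def]
        using cd t0p t1 by (intro continuous_intros) (auto elim!: continuous_on_subset)
      fix t assume t: "t0 < t" "t < t1"
      have tp: "0 < t" "t < pi/2" using t t0p t1 by auto
      show "(e has_real_derivative (u' t - v' t) * exp (- (M * t)) + d t * (exp (- (M * t)) * (- M))) (at t)"
        unfolding e_def[abs_def] using dd[OF tp]
        by (auto intro!: derivative_eq_intros)
      have dp: "0 < d t" using dpos t by auto
      have "norm (A t) \<le> M" using M t by auto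
      hence "- A t \<le> M" by simp
      hence "u' t - v' t \<le> M * d t"
        using dle[of t] tp dp unfolding A_def
        by (smt (verit, best) mult_right_mono mult_minus_left)
      hence "(u' t - v' t) - M * d t \<le> 0" by simp
      hence "((u' t - v' t) - M * d t) * exp (- (M * t)) \<le> 0" by (simp add: mult_nonpos_nonneg)
      thus "(u' t - v' t) * exp (- (M * t)) + d t * (exp (- (M * t)) * (- M)) \<le> 0"
        by (simp add: algebra_simps)
    qed
    moreover have "0 < e t1" using dpos[of t1] t0lt by (simp add: e_def)
    ultimately show False using dt0 by (simp add: e_def)
  qed
qed



definition zf :: "real \<Rightarrow> real" where "zf t = (sin (t/2))^2"

lemma cos_zf: "cos t = 1 - 2 * zf t"
  using cos_double_sin[of "t/2"] by (simp add: zf_def)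

lemma zf_q: "zf t * (1 - zf t) = (sin t)^2 / 4"
proof -
  have "sin t = 2 * sin (t/2) * cos (t/2)" using sin_double[of "t/2"] by simp
  hence "(sin t)^2 = 4 * (sin (t/2))^2 * (cos (t/2))^2" by (simp add: power2_eq_square)
  also have "(cos (t/2))^2 = 1 - (sin (t/2))^2" by (simp add: cos_squared_eq)
  finally show ?thesis by (simp add: zf_def)
qed

lemma zf_range: "0 \<le> t \<Longrightarrow> t \<le> pi/2 \<Longrightarrow> 0 \<le> zf t \<and> zf t \<le> 1/2"
proof -
  assume t: "0 \<le> t" "t \<le> pi/2"
  have "0 \<le> cos t" using t by (intro cos_ge_zero) auto
  thus ?thesis using cos_zf[of t] by (simp add: zf_def)
qed

lemma zf_pos: "0 < t \<Longrightarrow> t \<le> pi/2 \<Longrightarrow> 0 < zf t"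
proof -
  assume t: "0 < t" "t \<le> pi/2"
  have "0 < sin (t/2)" using t pi_gt_zero by (intro sin_gt_zero) auto
  thus ?thesis by (simp add: zf_def)
qed

lemma zf0: "zf 0 = 0" by (simp add: zf_def)

lemma zf_deriv: "(zf has_real_derivative sin t / 2) (at t within A)"
proof -
  have "(zf has_real_derivative 2 * sin (t/2) * (cos (t/2) * (1/2))) (at t within A)"
    unfolding zf_def[abs_def] by (auto intro!: derivative_eq_intros)
  moreover have "2 * sin (t/2) * (cos (t/2) * (1/2)) = sin t / 2"
    using sin_double[of "t/2"] by simp
  ultimately show ?thesis by (simp only:)
qed

lemma sin_pos_half: "0 < t \<Longrightarrow> t \<le> pi/2 \<Longrightarrow> 0 < sin t"
  using pi_gt_zero by (intro sin_gt_zero) auto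

definition hs :: "real \<Rightarrow> real \<Rightarrow> real" where "hs a t = Hv a (zf t)"

lemma hs_deriv:
  assumes "1/2 \<le> a" "a < 1" "0 \<le> t" "t \<le> pi/2"
  shows "(hs a has_real_derivative HD a (zf t) * (sin t / 2)) (at t within A)"
proof -
  have z: "0 \<le> zf t" "zf t < 1" using zf_range[OF assms(3,4)] by auto
  show ?thesis unfolding hs_def[abs_def]
    by (rule DERIV_chain2[OF H_deriv[OF assms(1,2) z] zf_deriv])
qed

lemma hs_cont: "1/2 \<le> a \<Longrightarrow> a < 1 \<Longrightarrow> S \<subseteq> {0..pi/2} \<Longrightarrow> continuous_on S (hs a)"
  by (rule continuous_at_imp_continuous_on)
     (auto intro!: DERIV_isCont[OF hs_deriv])

lemma ode_from_ric:
  assumes "0 < t" "t \<le> pi/2"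
    and ric: "2 * zf t * (1 - zf t) * D = - (a * y^2 - (1 - 2 * zf t) * y + 1 - a)"
  shows "D * (sin t / 2) = rhs a t y"
proof -
  have s: "0 < sin t" using sin_pos_half assms by simp
  have e: "(sin t)^2 / 2 = 2 * zf t * (1 - zf t)" using zf_q[of t] by simp
  have "(sin t)^2 / 2 * D = 2 * zf t * (1 - zf t) * D" by (simp only: e)
  hence "(sin t)^2 / 2 * D = - (a * y^2 - (1 - 2 * zf t) * y + 1 - a)" using ric by simp
  hence "(sin t)^2 / 2 * D = - (a * y^2 - cos t * y + 1 - a)" using cos_zf[of t] by simp
  thus ?thesis using s unfolding rhs_def by (simp add: field_simps power2_eq_square)
qed

lemma hs_sol: assumes "1/2 \<le> a" "a < 1" shows "is_solution a (hs a)"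
  unfolding is_solution_def
proof (intro conjI exI)
  have ct: "continuous_on {0<..pi/2} (hs a)" using assms by (intro hs_cont) auto
  show "C0C1_with_deriv (hs a) (\<lambda>t. rhs a t (hs a t))"
    unfolding C0C1_with_deriv_def
  proof (intro conjI ballI)
    show "continuous_on {0..pi / 2} (hs a)" using assms by (intro hs_cont) auto
    fix t :: real assume t: "t \<in> {0<..pi/2}"
    have z: "0 \<le> zf t" "zf t < 1" using zf_range[of t] t by auto
    have "(hs a has_real_derivative HD a (zf t) * (sin t / 2)) (at t within {0<..pi/2})"
      using hs_deriv assms t by auto
    moreover have "HD a (zf t) * (sin t / 2) = rhs a t (hs a t)"
      using ode_from_ric[of t "HD a (zf t)" a "hs a t"] t H_ric[OF assms z] by (simp add: hs_def mult.assoc)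
    ultimately show "(hs a has_real_derivative rhs a t (hs a t)) (at t within {0<..pi/2})" by simp
  next
    have "\<forall>t\<in>{0<..pi/2}. sin t \<noteq> 0" using sin_pos_half by force
    then show "continuous_on {0<..pi / 2} (\<lambda>t. rhs a t (hs a t))"
      unfolding rhs_def using ct by (intro continuous_intros) auto
  qed
  show "\<forall>t\<in>{0<..pi / 2}. rhs a t (hs a t) = rhs a t (hs a t)" by simp
  show "hs a 0 = 1" by (simp add: hs_def zf0 H0)
qed

lemma hs_lt1: "1/2 \<le> a \<Longrightarrow> a < 1 \<Longrightarrow> 0 < t \<Longrightarrow> t \<le> pi/2 \<Longrightarrow> hs a t < 1"
  unfolding hs_def using zf_pos zf_range H_lt1 by (smt (verit))
lemma hs_ge0: "1/2 \<le> a \<Longrightarrow> a < 1 \<Longrightarrow> 0 \<le> t \<Longrightarrow> t \<le> pi/2 \<Longrightarrow> 0 \<le> hs a t"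
  unfolding hs_def using zf_range[of t] H_ge[of a "zf t"] by auto



lemma sol_sub: "is_solution a h \<Longrightarrow> \<exists>h'. C0C1_with_deriv h h' \<and> (\<forall>t\<in>{0<..pi/2}. h' t \<le> rhs a t (h t)) \<and> h 0 \<le> 1"
  unfolding is_solution_def by force
lemma sol_super: "is_solution a h \<Longrightarrow> \<exists>h'. C0C1_with_deriv h h' \<and> (\<forall>t\<in>{0<..pi/2}. h' t \<ge> rhs a t (h t)) \<and> 1 \<le> h 0"
  unfolding is_solution_def by force

lemma uniq: assumes "1/2 < a" "is_solution a g" "is_solution a h" shows "\<forall>t\<in>{0..pi/2}. g t \<le> h t"
proof -
  obtain g' where g: "C0C1_with_deriv g g'" "\<forall>t\<in>{0<..pi/2}. g' t \<le> rhs a t (g t)" "g 0 \<le> 1"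
    using sol_sub[OF assms(2)] by blast
  obtain h' where h: "C0C1_with_deriv h h'" "\<forall>t\<in>{0<..pi/2}. h' t \<ge> rhs a t (h t)" "1 \<le> h 0"
    using sol_super[OF assms(3)] by blast
  show ?thesis by (rule compare[OF assms(1) g h])
qed

lemma rhs_alpha: "sin t \<noteq> 0 \<Longrightarrow> rhs a2 t y - rhs a1 t y = (a2 - a1) * (1 - y^2) / sin t"
  by (simp add: rhs_def field_simps power2_eq_square)

lemma strict_comp:
  assumes a: "1/2 < a1" "a1 < a2" "a2 < 1" and s1: "is_solution a1 h1" and s2: "is_solution a2 h2"
  shows "\<forall>t\<in>{0<..pi/2}. h1 t < h2 t"
proof -
  have eq1: "h1 t = hs a1 t" if "t \<in> {0..pi/2}" for t
    using uniq[of a1 h1 "hs a1"] uniq[of a1 "hs a1" h1] hs_sol[of a1] a s1 that by force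
  obtain h1' where h1: "C0C1_with_deriv h1 h1'" "\<forall>t\<in>{0<..pi/2}. h1' t = rhs a1 t (h1 t)" "h1 0 = 1"
    using s1 unfolding is_solution_def by blast
  obtain h2' where h2: "C0C1_with_deriv h2 h2'" "\<forall>t\<in>{0<..pi/2}. h2' t = rhs a2 t (h2 t)" "h2 0 = 1"
    using s2 unfolding is_solution_def by blast
  have small: "\<bar>h1 t\<bar> < 1" if "t \<in> {0<..pi/2}" for t
    using eq1[of t] hs_lt1[of a1 t] hs_ge0[of a1 t] a that by auto
  have gap: "rhs a1 t (h1 t) < rhs a2 t (h1 t)" if "t \<in> {0<..pi/2}" for t
  proof -
    have s: "0 < sin t" using sin_pos_half that by auto
    have "0 < 1 - (h1 t)^2" using small[OF that] by (simp add: abs_square_less_1)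
    hence "0 < (a2 - a1) * (1 - (h1 t)^2) / sin t" using a s by simp
    thus ?thesis using rhs_alpha[of t a2 "h1 t" a1] s by simp
  qed
  have le: "\<forall>t\<in>{0..pi/2}. h1 t \<le> h2 t"
  proof (rule compare[of a2 h1 h1' h2 h2'])
    show "1/2 < a2" using a by simp
    show "C0C1_with_deriv h1 h1'" by (rule h1(1))
    show "\<forall>t\<in>{0<..pi/2}. h1' t \<le> rhs a2 t (h1 t)" using h1(2) gap by (auto intro: less_imp_le)
    show "h1 0 \<le> 1" using h1 by simp
    show "C0C1_with_deriv h2 h2'" by (rule h2(1))
    show "\<forall>t\<in>{0<..pi/2}. rhs a2 t (h2 t) \<le> h2' t" using h2(2) by simp
    show "1 \<le> h2 0" using h2 by simp
  qed
  show ?thesis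
  proof (rule ballI, rule ccontr)
    fix t1 assume t1: "t1 \<in> {0<..pi/2}" "\<not> h1 t1 < h2 t1"
    have "h1 t1 \<le> h2 t1" using le t1(1) by auto
    hence e: "h1 t1 = h2 t1" using t1(2) by simp
    have d1: "(h1 has_real_derivative h1' t1) (at t1 within {0<..pi/2})"
      using h1(1) t1 unfolding C0C1_with_deriv_def by blast
    have d2: "(h2 has_real_derivative h2' t1) (at t1 within {0<..pi/2})"
      using h2(1) t1 unfolding C0C1_with_deriv_def by blast
    have dd: "((\<lambda>t. h1 t - h2 t) has_real_derivative h1' t1 - h2' t1) (at t1 within {0<..pi/2})"
      by (rule derivative_intros d1 d2)+
    have neg: "h1' t1 - h2' t1 < 0" using h1(2) h2(2) t1 gap[OF t1(1)] e by auto
    obtain del where del: "del > 0" "\<forall>h>0. t1 - h \<in> {0<..pi/2} \<longrightarrow> h < del \<longrightarrow> h1 t1 - h2 t1 < h1 (t1 - h) - h2 (t1 - h)"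
      using has_real_derivative_neg_dec_left[OF dd neg] by blast
    define h where "h = min del t1 / 2"
    have hp: "0 < h" "h < del" "t1 - h \<in> {0<..pi/2}" using del t1 by (auto simp: h_def)
    hence "0 < h1 (t1 - h) - h2 (t1 - h)" using del e by auto
    moreover have "h1 (t1 - h) \<le> h2 (t1 - h)" using le hp by auto
    ultimately show False by simp
  qed
qed



abbreviation "F0 \<equiv> Fv (1/2)"
abbreviation "F10 \<equiv> F1v (1/2)"
abbreviation "G0 \<equiv> Gv (1/2)"
abbreviation "H0 \<equiv> Hv (1/2)"

definition PP :: "real \<Rightarrow> real" where
  "PP z = - (G0 z * (2 + z * G0 z)) / ((1 - z) * (F0 z)^2)"

lemma F0_ge1: "0 \<le> z \<Longrightarrow> z < 1 \<Longrightarrow> 1 \<le> F0 z" by (rule Fv_ge1) auto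
lemma F0_cont: "\<bar>z\<bar> < 1 \<Longrightarrow> isCont F0 z" by (rule DERIV_isCont, rule Fv_deriv) auto
lemma G0_cont: "\<bar>z\<bar> < 1 \<Longrightarrow> isCont G0 z" by (rule Gv_cont) auto

lemma PP_cont: "continuous_on {0..3/4} PP"
proof (rule continuous_at_imp_continuous_on, rule ballI)
  fix z :: real assume z: "z \<in> {0..3/4}"
  have "F0 z \<noteq> 0" using F0_ge1[of z] z by auto
  moreover have "1 - z \<noteq> 0" using z by auto
  ultimately show "isCont PP z" unfolding PP_def[abs_def] using z
    by (intro continuous_intros F0_cont G0_cont) auto
qed

lemma PP_nonpos: "0 \<le> z \<Longrightarrow> z \<le> 3/4 \<Longrightarrow> PP z \<le> 0"
proof -
  assume z: "0 \<le> z" "z \<le> 3/4"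
  have g: "0 \<le> G0 z" by (rule Gv_ge0) (use z in auto)
  have "0 \<le> G0 z * (2 + z * G0 z)" using g z by simp
  moreover have "0 < (1 - z) * (F0 z)^2" using F0_ge1[of z] z by simp
  ultimately show ?thesis unfolding PP_def by (simp add: divide_nonneg_pos)
qed

lemma PP_eq: assumes "0 < z" "z < 1" shows "PP z = 1/(z*(1-z)*(F0 z)^2) - 1/(z*(1-z))"
proof -
  have F: "F0 z = 1 + z * G0 z" by (rule Fv_G) (use assms in auto)
  have Fn: "F0 z \<noteq> 0" using F0_ge1[of z] assms by auto
  have q: "z * (1 - z) \<noteq> 0" using assms by simp
  have z0: "z \<noteq> 0" "1 - z \<noteq> 0" using assms by auto
  have "(F0 z)^2 / (z*(1-z)*(F0 z)^2) = 1/(z*(1-z))" using Fn by simp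
  hence "1/(z*(1-z)*(F0 z)^2) - 1/(z*(1-z)) = (1 - (F0 z)^2) / (z*(1-z)*(F0 z)^2)"
    by (simp add: diff_divide_distrib)
  also have "1 - (F0 z)^2 = z * (- (G0 z * (2 + z * G0 z)))"
    by (simp add: F power2_eq_square algebra_simps)
  also have "z * (- (G0 z * (2 + z * G0 z))) / (z*(1-z)*(F0 z)^2) = - (G0 z * (2 + z * G0 z)) / ((1 - z) * (F0 z)^2)"
    using z0 Fn by (simp add: field_simps)
  finally show ?thesis unfolding PP_def by simp
qed

definition II :: "real \<Rightarrow> real" where "II z = integral {0..z} PP"

lemma II_deriv: "0 < z \<Longrightarrow> z < 3/4 \<Longrightarrow> (II has_real_derivative PP z) (at z)"
proof -
  assume z: "0 < z" "z < 3/4"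
  have "(II has_real_derivative PP z) (at z within {0..3/4})"
    unfolding II_def[abs_def] by (rule integral_has_real_derivative[OF PP_cont]) (use z in auto)
  hence "(II has_real_derivative PP z) (at z within {0<..<3/4})"
    by (rule DERIV_subset) auto
  moreover have "at z within {0<..<3/4} = at z" by (rule at_within_open) (use z in auto)
  ultimately show ?thesis by simp
qed

lemma II_nonpos: "0 \<le> z \<Longrightarrow> z \<le> 3/4 \<Longrightarrow> II z \<le> 0"
proof -
  assume z: "0 \<le> z" "z \<le> 3/4"
  have "continuous_on {0..z} PP" by (rule continuous_on_subset[OF PP_cont]) (use z in auto)
  hence int: "(\<lambda>x. - PP x) integrable_on {0..z}" by (intro integrable_continuous_real continuous_intros)
  have "0 \<le> integral {0..z} (\<lambda>x. - PP x)"
    by (rule integral_nonneg[OF int]) (use PP_nonpos z in auto)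
  thus ?thesis by (simp add: II_def)
qed

definition YY :: "real \<Rightarrow> real \<Rightarrow> real" where
  "YY K z = K + (ln z - ln (1 - z) + II z) / 4"

lemma YY_deriv: assumes "0 < z" "z \<le> 1/2"
  shows "(YY K has_real_derivative 1 / (4 * z * (1 - z) * (F0 z)^2)) (at z)"
proof -
  have d: "(YY K has_real_derivative (1/z - (- 1) / (1 - z) + PP z) / 4) (at z)"
    unfolding YY_def[abs_def] using assms
    by (auto intro!: derivative_eq_intros II_deriv)
  have e: "(1/z - (- 1) / (1 - z) + PP z) / 4 = 1 / (4 * z * (1 - z) * (F0 z)^2)"
    using PP_eq[of z] assms F0_ge1[of z] by (simp add: field_simps)
  show ?thesis by (rule DERIV_cong[OF d e])
qed

lemma YY_le: assumes "0 < z" "z \<le> 1/2" shows "YY K z \<le> K"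
proof -
  have "ln z \<le> ln (1 - z)" using assms by simp
  moreover have "II z \<le> 0" using II_nonpos assms by simp
  ultimately show ?thesis by (simp add: YY_def)
qed

lemma YY_le2: assumes "0 < z" "z \<le> 1/2" shows "YY K z \<le> K + (ln z + ln 2) / 4"
proof -
  have "ln (1/2) \<le> ln (1 - z)" using assms by simp
  hence "- ln (1 - z) \<le> ln 2" by (simp add: ln_div)
  moreover have "II z \<le> 0" using II_nonpos assms by simp
  ultimately show ?thesis by (simp add: YY_def)
qed



definition WW :: "real \<Rightarrow> real \<Rightarrow> real" where
  "WW K z = (if z = 0 then 0 else 1 / ((F0 z)^2 * YY K z))"

definition WD :: "real \<Rightarrow> real \<Rightarrow> real" where
  "WD K z = - (2 * F0 z * F10 z * YY K z + (F0 z)^2 * (1 / (4 * z * (1 - z) * (F0 z)^2)))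
              / ((F0 z)^2 * YY K z)^2"

lemma WW_deriv: assumes "K < 0" "0 < z" "z \<le> 1/2"
  shows "(WW K has_real_derivative WD K z) (at z)"
proof -
  have Y: "YY K z < 0" using YY_le[OF assms(2,3), of K] assms by simp
  have F: "1 \<le> F0 z" using F0_ge1 assms by simp
  have nz: "(F0 z)^2 * YY K z \<noteq> 0" using Y F by simp
  have az: "\<bar>z\<bar> < 1" using assms by simp
  have dF: "((\<lambda>z. (F0 z)^2) has_real_derivative of_nat 2 * (F10 z * F0 z ^ (2 - Suc 0))) (at z)"
    by (rule DERIV_power[OF Fv_deriv]) (use az in auto)
  have dg: "((\<lambda>z. (F0 z)^2 * YY K z) has_real_derivative
      of_nat 2 * (F10 z * F0 z ^ (2 - Suc 0)) * YY K z + (F0 z)^2 * (1 / (4 * z * (1 - z) * (F0 z)^2))) (at z)"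
    by (rule DERIV_cong[OF DERIV_mult[OF dF YY_deriv[OF assms(2,3)]]]) simp
  have dq: "((\<lambda>z. 1 / ((F0 z)^2 * YY K z)) has_real_derivative
      (0 * ((F0 z)^2 * YY K z) - 1 * (of_nat 2 * (F10 z * F0 z ^ (2 - Suc 0)) * YY K z + (F0 z)^2 * (1 / (4 * z * (1 - z) * (F0 z)^2))))
      / (((F0 z)^2 * YY K z) * ((F0 z)^2 * YY K z))) (at z)"
    by (rule DERIV_divide[OF DERIV_const dg nz])
  have "((\<lambda>z. 1 / ((F0 z)^2 * YY K z)) has_real_derivative WD K z) (at z)"
    by (rule DERIV_cong[OF dq]) (simp add: WD_def power2_eq_square)
  thus ?thesis
    by (rule has_field_derivative_transform_within_open[where S="{0<..<1}"]) (use assms in \<open>auto simp: WW_def\<close>)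
qed

lemma WW_alg:
  fixes F F1 Y q :: real
  assumes "F \<noteq> 0" "Y \<noteq> 0" "q \<noteq> 0"
  shows "2*q*(-(2*F*F1*Y + 1/(4*q))/(F^2*Y)^2) = -((1/(F^2*Y))^2/2 + (4*q*F1/F)*(1/(F^2*Y)))"
  using assms by (simp add: field_simps power2_eq_square)

lemma WW_ric: assumes "K < 0" "0 < z" "z \<le> 1/2"
  shows "2 * z * (1 - z) * WD K z = - ((WW K z)^2 / 2 + H0 z * WW K z - (1 - 2*z) * WW K z)"
proof -
  have Y: "YY K z \<noteq> 0" using YY_le[OF assms(2,3), of K] assms by simp
  have F: "F0 z \<noteq> 0" using F0_ge1[of z] assms by simp
  have q: "z * (1 - z) \<noteq> 0" using assms by simp
  have s1: "(F0 z)^2 * (1 / (4 * z * (1 - z) * (F0 z)^2)) = 1 / (4 * (z * (1 - z)))"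
  proof -
    have "(F0 z)^2 * (1 / (4*z*(1-z)*(F0 z)^2)) = (F0 z)^2 / ((4 * (z * (1 - z))) * (F0 z)^2)"
      by (simp add: mult.assoc)
    also have "\<dots> = 1 / (4 * (z * (1 - z)))" using F by simp
    finally show ?thesis .
  qed
  have hm: "H0 z - (1 - 2*z) = 4 * (z * (1 - z)) * F10 z / F0 z"
    by (simp add: Hv_def field_simps)
  have w: "WW K z = 1 / ((F0 z)^2 * YY K z)" using assms by (simp add: WW_def)
  have "- ((WW K z)^2 / 2 + H0 z * WW K z - (1 - 2*z) * WW K z)
        = - ((WW K z)^2 / 2 + (H0 z - (1 - 2*z)) * WW K z)" by (simp add: algebra_simps)
  also have "\<dots> = -((1/((F0 z)^2*YY K z))^2/2 + (4*(z*(1-z))*F10 z/F0 z)*(1/((F0 z)^2*YY K z)))"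
    by (simp only: hm w)
  also have "\<dots> = 2*(z*(1-z))*(-(2*F0 z*F10 z*YY K z + 1/(4*(z*(1-z))))/((F0 z)^2*YY K z)^2)"
    by (rule WW_alg[OF F Y q, symmetric])
  also have "\<dots> = 2 * z * (1 - z) * WD K z" unfolding WD_def s1 by (simp add: mult.assoc)
  finally show ?thesis ..
qed

lemma WW_bounds: assumes "K < 0" "0 < z" "z \<le> 1/2" shows "1/K \<le> WW K z" "WW K z < 0"
proof -
  have Y: "YY K z \<le> K" using YY_le[OF assms(2,3), of K] by simp
  have F: "1 \<le> (F0 z)^2" using F0_ge1[of z] assms by (simp add: one_le_power)
  have "(F0 z)^2 * YY K z \<le> 1 * YY K z"
    using F Y assms by (intro mult_right_mono_neg) auto
  hence p: "(F0 z)^2 * YY K z \<le> K" using Y by simp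
  hence n: "(F0 z)^2 * YY K z < 0" using assms by simp
  show "1/K \<le> WW K z" using p n assms by (simp add: WW_def divide_le_eq_1 le_divide_eq field_simps)
  show "WW K z < 0" using n assms by (simp add: WW_def divide_neg_pos)
qed

lemma WW_cont0: assumes "K < 0" shows "continuous (at 0 within {0..1/2}) (WW K)"
  unfolding continuous_within_eps_delta
proof (intro allI impI)
  fix e :: real assume e: "0 < e"
  define d where "d = exp (- 4 / e) / 2"
  have d: "0 < d" by (simp add: d_def)
  show "\<exists>d>0. \<forall>x'\<in>{0..1/2}. dist x' 0 < d \<longrightarrow> dist (WW K x') (WW K 0) < e"
  proof (intro exI conjI ballI impI, rule d)
    fix x :: real assume x: "x \<in> {0..1/2}" "dist x 0 < d"
    show "dist (WW K x) (WW K 0) < e"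
    proof (cases "x = 0")
      case True thus ?thesis using e by (simp add: WW_def)
    next
      case False
      hence xp: "0 < x" "x \<le> 1/2" "x < d" using x by (auto simp: dist_real_def)
      have "2 * x < exp (- 4 / e)" using xp by (simp add: d_def)
      hence "ln (2 * x) < - 4 / e" using xp by (metis exp_less_cancel_iff exp_ln mult_pos_pos zero_less_numeral)
      hence l: "ln x + ln 2 < - 4 / e" using xp by (simp add: ln_mult)
      have "YY K x \<le> K + (ln x + ln 2) / 4" by (rule YY_le2) (use xp in auto)
      also have "\<dots> < - (1 / e)"
      proof -
        have "(ln x + ln 2) / 4 < (- 4 / e) / 4" using l by (intro divide_strict_right_mono) auto
        moreover have "(- 4 / e) / 4 = - (1 / e)" by simp
        ultimately have h: "(ln x + ln 2) / 4 < - (1 / e)" by simp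
        show ?thesis using h assms by linarith
      qed
      finally have Y: "YY K x < - (1 / e)" .
      have F: "1 \<le> (F0 x)^2" using F0_ge1[of x] xp by (simp add: one_le_power)
      have ie: "0 < 1 / e" using e by simp
      have Yn: "0 < - YY K x" using Y ie by linarith
      have a1: "(F0 x)^2 * (- YY K x) \<ge> 1 * (- YY K x)" using F Yn by (intro mult_right_mono) auto
      have a2: "1 / e < - YY K x" using Y by linarith
      have g: "(F0 x)^2 * (- YY K x) > 1 / e" using a1 a2 by linarith
      have "\<bar>WW K x\<bar> = 1 / ((F0 x)^2 * (- YY K x))" using xp Yn F
        by (simp add: WW_def abs_divide abs_mult)
      also have "\<dots> < 1 / (1 / e)"
      proof -
        have "0 < (F0 x)^2 * (- YY K x)" using g ie by linarith
        hence "0 < (F0 x)^2 * (- YY K x) * (1 / e)" using ie by (rule mult_pos_pos)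
        thus ?thesis using divide_strict_left_mono[OF g, of 1] by simp
      qed
      also have "\<dots> = e" by simp
      finally show ?thesis by (simp add: dist_real_def WW_def)
    qed
  qed
qed

lemma WW_cont: assumes "K < 0" shows "continuous_on {0..1/2} (WW K)"
  unfolding continuous_on_eq_continuous_within
proof
  fix z :: real assume z: "z \<in> {0..1/2}"
  show "continuous (at z within {0..1/2}) (WW K)"
  proof (cases "z = 0")
    case True thus ?thesis using WW_cont0[OF assms] by simp
  next
    case False
    hence "isCont (WW K) z" using z by (intro DERIV_isCont[OF WW_deriv[OF assms]]) auto
    thus ?thesis by (rule continuous_at_imp_continuous_at_within)
  qed
qed

lemma H0_ge: assumes "0 \<le> z" "z \<le> 1/2" shows "1/8 \<le> H0 z"
proof -
  have F: "1 \<le> F0 z" "F0 z \<le> 2" using F0_ge1[of z] Fv_le2[of "1/2" z] assms by auto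
  have c1: "cf (1/2) 1 = 1/4" by (simp add: cf.simps power2_eq_square)
  have F1: "1/4 \<le> F10 z" using F1v_ge[of "1/2" z] assms c1 by simp
  have "F10 z / F0 z \<ge> (1/4) / 2" using F F1 by (intro frac_le) auto
  hence r: "1/8 \<le> F10 z / F0 z" by simp
  have q: "0 \<le> z * (1 - z)" using assms by simp
  have "H0 z = 1 - 2*z + 4 * (z * (1 - z)) * (F10 z / F0 z)" by (simp add: Hv_def field_simps)
  also have "\<dots> \<ge> 1 - 2*z + 4 * (z * (1 - z)) * (1/8)" using r q by (intro add_left_mono mult_left_mono) auto
  finally have "1 - 2*z + z * (1 - z) / 2 \<le> H0 z" by simp
  moreover have "1/8 \<le> 1 - 2*z + z * (1 - z) / 2"
  proof -
    have zz: "z * z \<le> z * (1/2)" using assms by (intro mult_left_mono) auto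
    have "z * (1 - z) / 2 = z / 2 - z * z / 2" by (simp add: right_diff_distrib diff_divide_distrib)
    thus ?thesis using zz assms by linarith
  qed
  ultimately show ?thesis by simp
qed



definition hK :: "real \<Rightarrow> real \<Rightarrow> real" where "hK K t = hs (1/2) t + WW K (zf t)"

lemma zf_cont: "continuous_on S zf"
  by (rule continuous_at_imp_continuous_on) (auto intro!: DERIV_isCont[OF zf_deriv])

lemma hK_cont: assumes "K < 0" "S \<subseteq> {0..pi/2}" shows "continuous_on S (hK K)"
proof -
  have c1: "continuous_on S (hs (1/2))" using assms by (intro hs_cont) auto
  have "continuous_on S (\<lambda>t. WW K (zf t))"
  proof (rule continuous_on_compose2[OF WW_cont[OF assms(1)] zf_cont])
    show "zf ` S \<subseteq> {0..1/2}" using zf_range assms(2) by force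
  qed
  thus ?thesis using c1 unfolding hK_def[abs_def] by (intro continuous_intros)
qed

lemma hK_sol: assumes K: "K < 0" shows "is_solution (1/2) (hK K)"
  unfolding is_solution_def
proof (intro conjI exI)
  have ct: "continuous_on {0<..pi/2} (hK K)" using K by (intro hK_cont) auto
  show "C0C1_with_deriv (hK K) (\<lambda>t. rhs (1/2) t (hK K t))"
    unfolding C0C1_with_deriv_def
  proof (intro conjI ballI)
    show "continuous_on {0..pi / 2} (hK K)" using K by (intro hK_cont) auto
    fix t :: real assume t: "t \<in> {0<..pi/2}"
    define z where "z = zf t"
    have z: "0 < z" "z \<le> 1/2" using zf_range[of t] zf_pos[of t] t by (auto simp: z_def)
    have d1: "(hs (1/2) has_real_derivative HD (1/2) z * (sin t / 2)) (at t within {0<..pi/2})"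
      using hs_deriv[of "1/2" t] t by (auto simp: z_def)
    have d2: "((\<lambda>t. WW K (zf t)) has_real_derivative WD K z * (sin t / 2)) (at t)"
      unfolding z_def by (rule DERIV_chain2[OF WW_deriv[OF K] zf_deriv]) (use z in \<open>auto simp: z_def\<close>)
    have d: "(hK K has_real_derivative (HD (1/2) z + WD K z) * (sin t / 2)) (at t within {0<..pi/2})"
      unfolding hK_def[abs_def]
      using DERIV_add[OF d1 has_field_derivative_at_within[OF d2]] by (simp add: algebra_simps)
    have r1: "2*z*(1-z) * HD (1/2) z = -((1/2) * (H0 z)^2 - (1-2*z) * H0 z + 1 - 1/2)"
      by (rule H_ric) (use z in auto)
    have r2: "2 * z * (1 - z) * WD K z = - ((WW K z)^2 / 2 + H0 z * WW K z - (1 - 2*z) * WW K z)"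
      by (rule WW_ric[OF K z])
    have ric: "2 * zf t * (1 - zf t) * (HD (1/2) z + WD K z)
         = - ((1/2) * (H0 z + WW K z)^2 - (1 - 2 * zf t) * (H0 z + WW K z) + 1 - 1/2)"
      unfolding z_def[symmetric] using r1 r2 by (simp add: algebra_simps power2_eq_square)
    have "(HD (1/2) z + WD K z) * (sin t / 2) = rhs (1/2) t (H0 z + WW K z)"
      by (rule ode_from_ric[OF _ _ ric]) (use t in auto)
    also have "H0 z + WW K z = hK K t" by (simp add: hK_def hs_def z_def)
    finally show "(hK K has_real_derivative rhs (1/2) t (hK K t)) (at t within {0<..pi/2})"
      using d by simp
  next
    have "\<forall>t\<in>{0<..pi/2}. sin t \<noteq> 0" using sin_pos_half by force
    then show "continuous_on {0<..pi / 2} (\<lambda>t. rhs (1/2) t (hK K t))"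
      unfolding rhs_def using ct by (intro continuous_intros) auto
  qed
  show "\<forall>t\<in>{0<..pi / 2}. rhs (1/2) t (hK K t) = rhs (1/2) t (hK K t)" by simp
  show "hK K 0 = 1" by (simp add: hK_def hs_def zf0 H0 WW_def)
qed

lemma hK_pos: assumes "K \<le> -9" "0 \<le> t" "t \<le> pi/2" shows "0 < hK K t"
proof (cases "t = 0")
  case True thus ?thesis by (simp add: hK_def hs_def zf0 H0 WW_def)
next
  case False
  hence z: "0 < zf t" "zf t \<le> 1/2" using zf_range[of t] zf_pos[of t] assms by auto
  have h: "1/8 \<le> H0 (zf t)" using H0_ge z by simp
  have w: "1/K \<le> WW K (zf t)" using WW_bounds(1)[of K "zf t"] z assms by simp
  have k: "- (1/9) \<le> 1/K"
  proof -
    have "1/(-K) \<le> 1/9" using assms by (intro divide_left_mono) auto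
    moreover have "1/(-K) = - (1/K)" by simp
    ultimately show ?thesis by linarith
  qed
  show ?thesis using h w k by (simp add: hK_def hs_def)
qed

lemma zf_pi2: "zf (pi/2) = 1/2" using cos_zf[of "pi/2"] by simp

lemma hK_inj: assumes "K1 < 0" "K2 < 0" "hK K1 (pi/2) = hK K2 (pi/2)" shows "K1 = K2"
proof -
  have e: "WW K1 (1/2) = WW K2 (1/2)" using assms(3) by (simp add: hK_def zf_pi2)
  have F: "F0 (1/2) \<noteq> 0" using F0_ge1[of "1/2"] by simp
  have Y1: "YY K1 (1/2) \<noteq> 0" using YY_le[of "1/2" K1] assms by simp
  have Y2: "YY K2 (1/2) \<noteq> 0" using YY_le[of "1/2" K2] assms by simp
  have "(F0 (1/2))^2 * YY K1 (1/2) = (F0 (1/2))^2 * YY K2 (1/2)"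
    using e F Y1 Y2 by (simp add: WW_def)
  hence "YY K1 (1/2) = YY K2 (1/2)" using F by simp
  thus ?thesis by (simp add: YY_def)
qed

lemma part2: "uncountable ((\<lambda>h. restrict h {0..pi/2}) `
            {h. is_solution (1/2) h \<and> (\<forall>\<theta>\<in>{0..pi/2}. h \<theta> > 0)})"
proof
  assume c: "countable ((\<lambda>h. restrict h {0..pi/2}) `
            {h. is_solution (1/2) h \<and> (\<forall>\<theta>\<in>{0..pi/2}. h \<theta> > 0)})"
  define f where "f K = restrict (hK K) {0..pi/2}" for K
  have sub: "f ` {-10<..<-9} \<subseteq> (\<lambda>h. restrict h {0..pi/2}) `
            {h. is_solution (1/2) h \<and> (\<forall>\<theta>\<in>{0..pi/2}. h \<theta> > 0)}"
  proof
    fix x assume "x \<in> f ` {-10<..<-9}"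
    then obtain K where K: "K \<in> {-10<..<-9}" "x = f K" by auto
    have "hK K \<in> {h. is_solution (1/2) h \<and> (\<forall>\<theta>\<in>{0..pi/2}. h \<theta> > 0)}"
      using hK_sol[of K] hK_pos[of K] K by auto
    thus "x \<in> (\<lambda>h. restrict h {0..pi/2}) ` {h. is_solution (1/2) h \<and> (\<forall>\<theta>\<in>{0..pi/2}. h \<theta> > 0)}"
      using K by (auto simp: f_def)
  qed
  have inj: "inj_on f {-10<..<-9}"
  proof (rule inj_onI)
    fix K1 K2 assume K: "K1 \<in> {-10<..<-9}" "K2 \<in> {-10<..<-9}" "f K1 = f K2"
    have "f K1 (pi/2) = f K2 (pi/2)" using K by simp
    hence "hK K1 (pi/2) = hK K2 (pi/2)" by (simp add: f_def)
    thus "K1 = K2" using hK_inj K by auto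
  qed
  have "countable (f ` {-10<..<-9})" using countable_subset[OF sub c] .
  hence "countable {-10<..<-9::real}" using countable_image_inj_on inj by blast
  thus False using uncountable_open_interval[of "-10::real" "-9"] by simp
qed



theorem lemma3:
  shows "(\<forall>\<alpha>\<in>{1/2<..<1}. \<exists>h. is_solution \<alpha> h \<and>
            (\<forall>g. is_solution \<alpha> g \<longrightarrow> (\<forall>\<theta>\<in>{0..pi/2}. g \<theta> = h \<theta>)))
      \<and> (\<forall>\<alpha>1 \<alpha>2 h1 h2. 1/2 < \<alpha>1 \<and> \<alpha>1 < \<alpha>2 \<and> \<alpha>2 < 1 \<and>
            is_solution \<alpha>1 h1 \<and> is_solution \<alpha>2 h2 \<longrightarrow>
            (\<forall>\<theta>\<in>{0<..pi/2}. h1 \<theta> < h2 \<theta>))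
      \<and> uncountable ((\<lambda>h. restrict h {0..pi/2}) `
            {h. is_solution (1/2) h \<and> (\<forall>\<theta>\<in>{0..pi/2}. h \<theta> > 0)})
      \<and> (\<forall>\<alpha>\<in>{1/2<..<1}. \<forall>hb h. is_supersolution \<alpha> hb \<and> is_solution \<alpha> h \<longrightarrow>
            (\<forall>\<theta>\<in>{0..pi/2}. h \<theta> \<le> hb \<theta>))"
proof (intro conjI)
  show "\<forall>\<alpha>\<in>{1/2<..<1}. \<exists>h. is_solution \<alpha> h \<and>
            (\<forall>g. is_solution \<alpha> g \<longrightarrow> (\<forall>\<theta>\<in>{0..pi/2}. g \<theta> = h \<theta>))"
  proof
    fix a :: real assume a: "a \<in> {1/2<..<1}"
    have s: "is_solution a (hs a)" using hs_sol a by auto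
    show "\<exists>h. is_solution a h \<and> (\<forall>g. is_solution a g \<longrightarrow> (\<forall>\<theta>\<in>{0..pi/2}. g \<theta> = h \<theta>))"
    proof (intro exI conjI allI impI ballI)
      show "is_solution a (hs a)" by (rule s)
      fix g t assume g: "is_solution a g" and t: "t \<in> {0..pi/2}"
      show "g t = hs a t" using uniq[of a g "hs a"] uniq[of a "hs a" g] a g s t by force
    qed
  qed
  show "\<forall>\<alpha>1 \<alpha>2 h1 h2. 1/2 < \<alpha>1 \<and> \<alpha>1 < \<alpha>2 \<and> \<alpha>2 < 1 \<and>
            is_solution \<alpha>1 h1 \<and> is_solution \<alpha>2 h2 \<longrightarrow>
            (\<forall>\<theta>\<in>{0<..pi/2}. h1 \<theta> < h2 \<theta>)"
    using strict_comp by blast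
  show "uncountable ((\<lambda>h. restrict h {0..pi/2}) `
            {h. is_solution (1/2) h \<and> (\<forall>\<theta>\<in>{0..pi/2}. h \<theta> > 0)})" by (rule part2)
  show "\<forall>\<alpha>\<in>{1/2<..<1}. \<forall>hb h. is_supersolution \<alpha> hb \<and> is_solution \<alpha> h \<longrightarrow>
            (\<forall>\<theta>\<in>{0..pi/2}. h \<theta> \<le> hb \<theta>)"
  proof (intro ballI allI impI)
    fix a hb h t assume a: "a \<in> {1/2<..<1}" and hh: "is_supersolution a hb \<and> is_solution a h"
      and t: "t \<in> {0..pi/2}"
    obtain h' where h: "C0C1_with_deriv h h'" "\<forall>t\<in>{0<..pi/2}. h' t \<le> rhs a t (h t)" "h 0 \<le> 1"
      using sol_sub hh by blast
    obtain hb' where hb: "C0C1_with_deriv hb hb'" "\<forall>t\<in>{0<..pi/2}. hb' t \<ge> rhs a t (hb t)" "1 \<le> hb 0"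
      using hh unfolding is_supersolution_def by blast
    have "1/2 < a" using a by simp
    from compare[OF this h hb] t show "h t \<le> hb t" by blast
  qed
qed


end
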